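(* In every dynamic network congestion game, there exists a blind Nash equilibrium.
   Context: An arena is $\mathcal A=(V,E,\mathsf{src},\mathsf{tgt})$ with $V$ finite, $E$ a partial function from $V\times V$ to non-decreasing piecewise-affine functions $\mathbb N\to\mathbb N$ (edge $e$ has cost function $\ell_e$); $\mathsf{tgt}$ has only a self-loop of constant cost $0$ and is reachable from every state. A dynamic NCG $(\mathcal A,n)$ has players $[n]$ all starting in $\mathsf{src}$; in each step each player simultaneously picks an edge leaving their current state, moves along it and pays $\ell_e(u)$, $u$ being the number of players choosing that same edge $e$ in that step. Strategies map finite histories to edges; $\mathrm{cost}_i(\sigma)$ is player $i$'s total payment along the outcome of $\sigma$ until reaching $\mathsf{tgt}$ ($+\infty$ if never). A strategy is blind if it depends only on the sequence of states visited by the player itself (it follows a fixed path of $\mathcal A$). A blind Nash equilibrium is a profile $\sigma$ of blind strategies such that for all $k$, $\mathrm{cost}_k(\sigma)=\inf_{\sigma'_k\text{ blind}}\mathrm{cost}_k(\langle\sigma_{-k},\sigma'_k\rangle)$, where $\langle\sigma_{-k},\sigma'_k\rangle$ replaces $\sigma_k$ by $\sigma'_k$. *)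

theory Defs
  imports Main "HOL-Library.Extended_Nat"
begin

(* An arena: states of a finite type 'v; E v w = Some l means there is an edge
   (v,w) with cost function l; src and tgt are the source and target states. *)

definition affine_on :: "(nat \<Rightarrow> nat) \<Rightarrow> nat set \<Rightarrow> bool" where
  "affine_on f S \<longleftrightarrow> (\<exists>a b :: real. \<forall>x\<in>S. real (f x) = a * real x + b)"

(* f is piecewise affine: finitely many breakpoints B (with 0 \<in> B); on each piece
   [c, next breakpoint) starting at a breakpoint c, f is affine. *)
definition piecewise_affine :: "(nat \<Rightarrow> nat) \<Rightarrow> bool" where
  "piecewise_affine f \<longleftrightarrow>
     (\<exists>B. finite B \<and> 0 \<in> B \<and>
        (\<forall>c\<in>B. affine_on f {x. c \<le> x \<and> (\<forall>b\<in>B. b \<le> c \<or> x < b)}))"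

definition arena :: "('v::finite \<Rightarrow> 'v \<Rightarrow> (nat \<Rightarrow> nat) option) \<Rightarrow> 'v \<Rightarrow> 'v \<Rightarrow> bool" where
  "arena E src tgt \<longleftrightarrow>
     (\<forall>v w l. E v w = Some l \<longrightarrow> mono l \<and> piecewise_affine l) \<and>
     (\<forall>w. E tgt w \<noteq> None \<longleftrightarrow> w = tgt) \<and>
     E tgt tgt = Some (\<lambda>_. 0) \<and>
     (\<forall>v. (v, tgt) \<in> {(a, b). E a b \<noteq> None}\<^sup>*)"

(* A blind strategy maps the (nonempty) sequence of states visited by the player
   itself to the next state, i.e. to an edge leaving the current state. *)
definition blind_strategy :: "('v \<Rightarrow> 'v \<Rightarrow> (nat \<Rightarrow> nat) option) \<Rightarrow> ('v list \<Rightarrow> 'v) \<Rightarrow> bool" where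
  "blind_strategy E s \<longleftrightarrow> (\<forall>h. h \<noteq> [] \<longrightarrow> E (last h) (s h) \<noteq> None)"

fun hist :: "'v \<Rightarrow> ('v list \<Rightarrow> 'v) \<Rightarrow> nat \<Rightarrow> 'v list" where
  "hist src s 0 = [src]"
| "hist src s (Suc t) = hist src s t @ [s (hist src s t)]"

definition pos :: "'v \<Rightarrow> ('v list \<Rightarrow> 'v) \<Rightarrow> nat \<Rightarrow> 'v" where
  "pos src s t = last (hist src s t)"

definition step_edge :: "'v \<Rightarrow> ('v list \<Rightarrow> 'v) \<Rightarrow> nat \<Rightarrow> 'v \<times> 'v" where
  "step_edge src s t = (pos src s t, pos src s (Suc t))"

definition load :: "'v \<Rightarrow> nat \<Rightarrow> (nat \<Rightarrow> 'v list \<Rightarrow> 'v) \<Rightarrow> nat \<Rightarrow> 'v \<times> 'v \<Rightarrow> nat" where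
  "load src n P t e = card {j. j < n \<and> step_edge src (P j) t = e}"

definition step_cost :: "('v \<Rightarrow> 'v \<Rightarrow> (nat \<Rightarrow> nat) option) \<Rightarrow> 'v \<Rightarrow> nat \<Rightarrow>
    (nat \<Rightarrow> 'v list \<Rightarrow> 'v) \<Rightarrow> nat \<Rightarrow> nat \<Rightarrow> nat" where
  "step_cost E src n P i t =
     (let e = step_edge src (P i) t in the (E (fst e) (snd e)) (load src n P t e))"

definition cost :: "('v \<Rightarrow> 'v \<Rightarrow> (nat \<Rightarrow> nat) option) \<Rightarrow> 'v \<Rightarrow> 'v \<Rightarrow> nat \<Rightarrow>
    (nat \<Rightarrow> 'v list \<Rightarrow> 'v) \<Rightarrow> nat \<Rightarrow> enat" where
  "cost E src tgt n P i =
     (if \<exists>t. pos src (P i) t = tgt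
      then enat (\<Sum>t < (LEAST t. pos src (P i) t = tgt). step_cost E src n P i t)
      else \<infinity>)"

definition blind_NE :: "('v \<Rightarrow> 'v \<Rightarrow> (nat \<Rightarrow> nat) option) \<Rightarrow> 'v \<Rightarrow> 'v \<Rightarrow> nat \<Rightarrow>
    (nat \<Rightarrow> 'v list \<Rightarrow> 'v) \<Rightarrow> bool" where
  "blind_NE E src tgt n P \<longleftrightarrow>
     (\<forall>i<n. blind_strategy E (P i)) \<and>
     (\<forall>k<n. cost E src tgt n P k =
              (INF s \<in> {s. blind_strategy E s}. cost E src tgt n (P(k := s)) k))"

end

theory Submission
  imports Defs
begin

definition ff :: "('v \<Rightarrow> 'v \<Rightarrow> (nat \<Rightarrow> nat) option) \<Rightarrow> 'v \<times> 'v \<Rightarrow> nat \<Rightarrow> nat" where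
  "ff E e = the (E (fst e) (snd e))"

definition loadx :: "'v \<Rightarrow> nat \<Rightarrow> (nat \<Rightarrow> 'v list \<Rightarrow> 'v) \<Rightarrow> nat \<Rightarrow> nat \<Rightarrow> 'v \<times> 'v \<Rightarrow> nat" where
  "loadx src n P k t e = card {j. j < n \<and> j \<noteq> k \<and> step_edge src (P j) t = e}"

definition pot :: "('v::finite \<Rightarrow> 'v \<Rightarrow> (nat \<Rightarrow> nat) option) \<Rightarrow> 'v \<Rightarrow> nat \<Rightarrow> (nat \<Rightarrow> 'v list \<Rightarrow> 'v) \<Rightarrow> nat \<Rightarrow> nat" where
  "pot E src n P T = (\<Sum>t<T. \<Sum>e\<in>UNIV. \<Sum>u<load src n P t e. ff E e (Suc u))"

definition potx :: "('v::finite \<Rightarrow> 'v \<Rightarrow> (nat \<Rightarrow> nat) option) \<Rightarrow> 'v \<Rightarrow> nat \<Rightarrow> (nat \<Rightarrow> 'v list \<Rightarrow> 'v) \<Rightarrow> nat \<Rightarrow> nat \<Rightarrow> nat" where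
  "potx E src n P k T = (\<Sum>t<T. \<Sum>e\<in>UNIV. \<Sum>u<loadx src n P k t e. ff E e (Suc u))"

lemma pos_Suc: "pos src s (Suc t) = s (hist src s t)"
  by (simp add: pos_def)

lemma hist_ne: "hist src s t \<noteq> []"
  by (induct t) auto

lemma length_hist: "length (hist src s t) = Suc t"
  by (induct t) auto

lemma stay:
  assumes a: "arena E src tgt" and b: "blind_strategy E s" and p: "pos src s T = tgt" and le: "T \<le> t"
  shows "pos src s t = tgt"
  using le
proof (induct t rule: dec_induct)
  case base then show ?case using p by simp
next
  case (step m)
  have "E (last (hist src s m)) (s (hist src s m)) \<noteq> None"
    using b hist_ne[of src s m] unfolding blind_strategy_def by (elim allE impE)
  then have "E tgt (pos src s (Suc m)) \<noteq> None"
    using step(3) by (simp add: pos_def)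
  moreover have "\<forall>w. E tgt w \<noteq> None \<longleftrightarrow> w = tgt" using a unfolding arena_def by (elim conjE)
  ultimately show ?case by simp
qed

lemma sc_tgt:
  assumes a: "arena E src tgt" and "pos src (P k) t = tgt" and "pos src (P k) (Suc t) = tgt"
  shows "step_cost E src n P k t = 0"
  using assms unfolding step_cost_def step_edge_def arena_def by (simp add: Let_def)

lemma cost_eq:
  assumes a: "arena E src tgt" and b: "blind_strategy E (P k)" and p: "pos src (P k) T = tgt"
  shows "cost E src tgt n P k = enat (\<Sum>t<T. step_cost E src n P k t)"
proof -
  define L where "L = (LEAST t. pos src (P k) t = tgt)"
  have ex: "\<exists>t. pos src (P k) t = tgt" using p by blast
  have LT: "L \<le> T" unfolding L_def using p by (rule Least_le)
  have pL: "pos src (P k) L = tgt" unfolding L_def using p by (rule LeastI)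
  have U: "{..<T} = {..<L} \<union> {L..<T}" using LT by auto
  have z: "(\<Sum>t\<in>{L..<T}. step_cost E src n P k t) = 0"
  proof (rule sum.neutral, rule ballI)
    fix t assume "t \<in> {L..<T}"
    then have "L \<le> t" "L \<le> Suc t" by auto
    then show "step_cost E src n P k t = 0"
      using sc_tgt[OF a] stay[OF a b pL] by blast
  qed
  have "(\<Sum>t<T. step_cost E src n P k t) = (\<Sum>t<L. step_cost E src n P k t)"
    unfolding U by (subst sum.union_disjoint) (auto simp: z)
  then show ?thesis unfolding cost_def using ex L_def by simp
qed

lemma load_split:
  assumes "k < n"
  shows "load src n P t e = loadx src n P k t e + (if e = step_edge src (P k) t then 1 else 0)"
proof (cases "e = step_edge src (P k) t")
  case True
  have "{j. j < n \<and> step_edge src (P j) t = e} = insert k {j. j < n \<and> j \<noteq> k \<and> step_edge src (P j) t = e}"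
    using True assms by auto
  moreover have "finite {j. j < n \<and> j \<noteq> k \<and> step_edge src (P j) t = e}" by simp
  ultimately show ?thesis using True unfolding load_def loadx_def by simp
next
  case False
  have "{j. j < n \<and> step_edge src (P j) t = e} = {j. j < n \<and> j \<noteq> k \<and> step_edge src (P j) t = e}"
    using False by auto
  then show ?thesis using False unfolding load_def loadx_def by simp
qed

lemma step_split:
  fixes E :: "'v::finite \<Rightarrow> 'v \<Rightarrow> (nat \<Rightarrow> nat) option"
  assumes "k < n"
  shows "(\<Sum>e\<in>UNIV. \<Sum>u<load src n P t e. ff E e (Suc u)) =
         (\<Sum>e\<in>UNIV. \<Sum>u<loadx src n P k t e. ff E e (Suc u)) + step_cost E src n P k t"
proof -
  let ?ek = "step_edge src (P k) t"
  have "\<And>e. (\<Sum>u<load src n P t e. ff E e (Suc u)) =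
         (\<Sum>u<loadx src n P k t e. ff E e (Suc u)) + (if e = ?ek then ff E e (Suc (loadx src n P k t e)) else 0)"
  proof -
    fix e
    show "(\<Sum>u<load src n P t e. ff E e (Suc u)) =
         (\<Sum>u<loadx src n P k t e. ff E e (Suc u)) + (if e = ?ek then ff E e (Suc (loadx src n P k t e)) else 0)"
    proof (cases "e = ?ek")
      case True
      then have "load src n P t e = Suc (loadx src n P k t e)" using load_split[OF assms, where src=src and P=P and t=t and e=e] by simp
      then show ?thesis using True by simp
    next
      case False
      then have "load src n P t e = loadx src n P k t e" using load_split[OF assms, where src=src and P=P and t=t and e=e] by simp
      then show ?thesis using False by simp
    qed
  qed
  then have "(\<Sum>e\<in>UNIV. \<Sum>u<load src n P t e. ff E e (Suc u)) =
         (\<Sum>e\<in>UNIV. \<Sum>u<loadx src n P k t e. ff E e (Suc u)) + (\<Sum>e\<in>UNIV. if e = ?ek then ff E e (Suc (loadx src n P k t e)) else 0)"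
    by (simp add: sum.distrib)
  also have "(\<Sum>e\<in>UNIV. if e = ?ek then ff E e (Suc (loadx src n P k t e)) else 0) = ff E ?ek (Suc (loadx src n P k t ?ek))"
    by simp
  also have "\<dots> = step_cost E src n P k t"
    using load_split[OF assms, where src=src and P=P and t=t and e="?ek"] by (simp add: step_cost_def ff_def Let_def)
  finally show ?thesis .
qed

lemma pot_split:
  fixes E :: "'v::finite \<Rightarrow> 'v \<Rightarrow> (nat \<Rightarrow> nat) option"
  assumes "k < n"
  shows "pot E src n P T = potx E src n P k T + (\<Sum>t<T. step_cost E src n P k t)"
  unfolding pot_def potx_def sum.distrib[symmetric]
  by (rule sum.cong[OF refl]) (rule step_split[OF assms])

lemma potx_upd: "potx E src n (P(k := s)) k T = potx E src n P k T"
proof -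
  have "\<And>t e. loadx src n (P(k := s)) k t e = loadx src n P k t e"
    unfolding loadx_def by (rule arg_cong[where f=card]) auto
  then show ?thesis unfolding potx_def by simp
qed

lemma pot_ext:
  fixes E :: "'v::finite \<Rightarrow> 'v \<Rightarrow> (nat \<Rightarrow> nat) option"
  assumes a: "arena E src tgt" and f: "\<forall>i<n. blind_strategy E (P i) \<and> pos src (P i) T = tgt"
    and le: "T \<le> T'"
  shows "pot E src n P T' = pot E src n P T"
proof -
  have z: "(\<Sum>e\<in>UNIV. \<Sum>u<load src n P t e. ff E e (Suc u)) = 0" if "T \<le> t" for t
  proof (rule sum.neutral, rule ballI)
    fix e :: "'v \<times> 'v"
    have se: "\<And>j. j < n \<Longrightarrow> step_edge src (P j) t = (tgt, tgt)"
      unfolding step_edge_def using f stay[OF a] \<open>T \<le> t\<close> by (metis le_SucI)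
    show "(\<Sum>u<load src n P t e. ff E e (Suc u)) = 0"
    proof (cases "e = (tgt, tgt)")
      case True
      then show ?thesis using a unfolding arena_def ff_def by simp
    next
      case False
      then have "{j. j < n \<and> step_edge src (P j) t = e} = {}" using se by auto
      then have "load src n P t e = 0" unfolding load_def by (simp only: card.empty)
      then show ?thesis by simp
    qed
  qed
  have U: "{..<T'} = {..<T} \<union> {T..<T'}" using le by auto
  show ?thesis unfolding pot_def U
    by (subst sum.union_disjoint) (auto simp: z)
qed

lemma succ_ex:
  assumes a: "arena E src tgt"
  shows "\<exists>w. E v w \<noteq> None"
proof (cases "v = tgt")
  case True then show ?thesis using a unfolding arena_def by blast
next
  case False
  have "(v, tgt) \<in> {(a, b). E a b \<noteq> None}\<^sup>*" using a unfolding arena_def by blast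
  then show ?thesis using False by (cases rule: converse_rtranclE) auto
qed

lemma feasible_ex:
  assumes a: "arena E src tgt"
  shows "\<exists>s T. blind_strategy E s \<and> pos src s T = tgt"
proof -
  have "(src, tgt) \<in> {(a, b). E a b \<noteq> None}\<^sup>*" using a unfolding arena_def by blast
  then obtain N where "(src, tgt) \<in> {(a, b). E a b \<noteq> None} ^^ N"
    using rtrancl_imp_relpow by blast
  then obtain f where f0: "f 0 = src" and fN: "f N = tgt"
    and fs: "\<And>i. i < N \<Longrightarrow> E (f i) (f (Suc i)) \<noteq> None"
    unfolding relpow_fun_conv by blast
  define s where "s h = (if length h \<le> N \<and> last h = f (length h - 1) then f (length h)
                     else (SOME w. E (last h) w \<noteq> None))" for h
  have bl: "blind_strategy E s"
    unfolding blind_strategy_def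
  proof (intro allI impI)
    fix h :: "'a list" assume "h \<noteq> []"
    show "E (last h) (s h) \<noteq> None"
    proof (cases "length h \<le> N \<and> last h = f (length h - 1)")
      case True
      moreover have "0 < length h" using \<open>h \<noteq> []\<close> by simp
      ultimately have "length h - 1 < N" "Suc (length h - 1) = length h" by arith+
      then show ?thesis using True fs[of "length h - 1"] unfolding s_def by simp
    next
      case False
      have "\<exists>w. E (last h) w \<noteq> None" by (rule succ_ex[OF a])
      then have "E (last h) (SOME w. E (last h) w \<noteq> None) \<noteq> None" by (rule someI_ex)
      moreover from False have "s h = (SOME w. E (last h) w \<noteq> None)" unfolding s_def by (simp only: if_False)
      ultimately show ?thesis by simp
    qed
  qed
  have "t \<le> N \<Longrightarrow> pos src s t = f t" for t
  proof (induct t)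
    case 0 then show ?case using f0 by (simp add: pos_def)
  next
    case (Suc t)
    then have "pos src s t = f t" by simp
    then show ?case using Suc(2) unfolding pos_Suc s_def
      by (simp add: length_hist pos_def)
  qed
  then have "pos src s N = tgt" using fN by simp
  then show ?thesis using bl by blast
qed

theorem lemmaB1:
  fixes E :: "'v::finite \<Rightarrow> 'v \<Rightarrow> (nat \<Rightarrow> nat) option"
    and src tgt :: 'v and n :: nat
  assumes "arena E src tgt"
  shows "\<exists>P. blind_NE E src tgt n P"
proof -
  note a = assms
  define F where "F = (\<lambda>(P, T). \<forall>i<n. blind_strategy E (P i) \<and> pos src (P i) T = tgt)"
  obtain s0 T0 where "blind_strategy E s0" "pos src s0 T0 = tgt" using feasible_ex[OF a] by blast
  then have "F (\<lambda>_. s0, T0)" unfolding F_def by simp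
  then obtain PT where FPT: "F PT" and minPT: "\<And>y. F y \<Longrightarrow> (\<lambda>(P, T). pot E src n P T) PT \<le> (\<lambda>(P, T). pot E src n P T) y"
    using ex_has_least_nat[of F _ "\<lambda>(P, T). pot E src n P T"] by blast
  obtain P T where PT: "PT = (P, T)" by (cases PT)
  have FP: "\<forall>i<n. blind_strategy E (P i) \<and> pos src (P i) T = tgt" using FPT PT F_def by simp
  have mn: "pot E src n P T \<le> pot E src n P' T'" if "\<forall>i<n. blind_strategy E (P' i) \<and> pos src (P' i) T' = tgt" for P' T'
    using minPT[of "(P', T')"] that PT F_def by simp
  have "blind_NE E src tgt n P"
    unfolding blind_NE_def
  proof (intro conjI allI impI)
    fix i assume "i < n" then show "blind_strategy E (P i)" using FP by blast
  next
    fix k assume k: "k < n"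
    have bk: "blind_strategy E (P k)" and pk: "pos src (P k) T = tgt" using FP k by auto
    show "cost E src tgt n P k = (INF s \<in> {s. blind_strategy E s}. cost E src tgt n (P(k := s)) k)"
    proof (rule antisym)
      show "cost E src tgt n P k \<le> (INF s \<in> {s. blind_strategy E s}. cost E src tgt n (P(k := s)) k)"
      proof (rule INF_greatest)
        fix s assume "s \<in> {s. blind_strategy E s}"
        then have bs: "blind_strategy E s" by simp
        show "cost E src tgt n P k \<le> cost E src tgt n (P(k := s)) k"
        proof (cases "\<exists>t. pos src s t = tgt")
          case False
          then have "cost E src tgt n (P(k := s)) k = \<infinity>" unfolding cost_def by simp
          then show ?thesis by simp
        next
          case True
          then obtain t0 where t0: "pos src s t0 = tgt" by blast
          define T' where "T' = max T t0"
          let ?P' = "P(k := s)"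
          have F': "\<forall>i<n. blind_strategy E (?P' i) \<and> pos src (?P' i) T' = tgt"
          proof (intro allI impI)
            fix i assume i: "i < n"
            show "blind_strategy E (?P' i) \<and> pos src (?P' i) T' = tgt"
            proof (cases "i = k")
              case True
              have "pos src s T' = tgt" using stay[OF a bs t0] T'_def by simp
              then show ?thesis using True bs by simp
            next
              case False
              have "blind_strategy E (P i)" "pos src (P i) T = tgt" using FP i by auto
              moreover have "pos src (P i) T' = tgt" using stay[OF a calculation] T'_def by simp
              ultimately show ?thesis using False by simp
            qed
          qed
          have c': "cost E src tgt n ?P' k = enat (\<Sum>t<T'. step_cost E src n ?P' k t)"
          proof -
            have "blind_strategy E (?P' k)" "pos src (?P' k) T' = tgt" using F' k by blast+
            then show ?thesis by (rule cost_eq[OF a, where P="?P'" and k=k and n=n])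
          qed
          have c: "cost E src tgt n P k = enat (\<Sum>t<T'. step_cost E src n P k t)"
          proof -
            have "T \<le> T'" unfolding T'_def by simp
            then have "pos src (P k) T' = tgt" by (rule stay[OF a bk pk])
            then show ?thesis by (rule cost_eq[OF a, where P=P and k=k and n=n, OF bk])
          qed
          have "pot E src n P T' = pot E src n P T" by (rule pot_ext[OF a FP]) (simp add: T'_def)
          also have "\<dots> \<le> pot E src n ?P' T'" by (rule mn[OF F'])
          finally have "potx E src n P k T' + (\<Sum>t<T'. step_cost E src n P k t) \<le>
                        potx E src n ?P' k T' + (\<Sum>t<T'. step_cost E src n ?P' k t)"
            by (simp only: pot_split[OF k])
          then have "(\<Sum>t<T'. step_cost E src n P k t) \<le> (\<Sum>t<T'. step_cost E src n ?P' k t)"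
            using potx_upd[of E src n P k s T'] by linarith
          then show ?thesis using c c' by simp
        qed
      qed
    next
      show "(INF s \<in> {s. blind_strategy E s}. cost E src tgt n (P(k := s)) k) \<le> cost E src tgt n P k"
        using INF_lower[of "P k" "{s. blind_strategy E s}" "\<lambda>s. cost E src tgt n (P(k := s)) k"] bk
        by simp
    qed
  qed
  then show ?thesis by blast
qed

end
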